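(* Assume (H1)–(H4) and let $H$ be a defining function for $Y$. Let $u$ be an upper semicontinuous viscosity subsolution of $( * )$ on $X$, and suppose $\phi\in C^2$ is such that $u-\phi$ has a strict local maximum at $x\in X$. Then $$\max\{-g(\nabla\phi(x))\det(D^2\phi(x))+f(x),\;-\lambda_1(D^2\phi(x)),\;H(\nabla\phi(x))\}\le 0.$$
   Context: Standing hypotheses (H1)–(H4): (H1) $X,Y\subset\mathbb{R}^n$ are convex, bounded, open domains. (H2) $f\in L^1(X)$ is non-negative and lower semicontinuous. (H3) $g\in L^1(\mathbb{R}^n)$ is positive on $Y$, vanishes on $\mathbb{R}^n\setminus Y$, and is upper semicontinuous. (H4) $\int_X f\,dx=\int_Y g\,dy$. A defining function for $Y$ is a continuous $H:\mathbb{R}^n\to\mathbb{R}$ with $H<0$ on $Y$, $H=0$ on $\partial Y$, $H>0$ on $\mathbb{R}^n\setminus\bar Y$. $\lambda_1(A)$ is the smallest eigenvalue of a symmetric matrix $A$. Equation $( * )$: $\max\{-g(\nabla u)\det(D^2u)+f,-\lambda_1(D^2u),H(\nabla u)\}=0$ in $X$. With $F(x,p,A)=\max\{-g(p)\det A+f(x),-\lambda_1(A),H(p)\}$, an upper semicontinuous $u$ is a viscosity subsolution of $( * )$ if for every $\phi\in C^2$ and $x\in X$ at which $u-\phi$ has a local maximum, $F_*(x,\nabla\phi(x),D^2\phi(x))\le0$, $F_*$ the lower semicontinuous envelope of $F$. *)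

theory Defs
  imports "HOL-Analysis.Analysis"
begin

definition usc_on :: "'a::metric_space set \<Rightarrow> ('a \<Rightarrow> real) \<Rightarrow> bool" where
  "usc_on S u \<longleftrightarrow> (\<forall>x\<in>S. \<forall>c. u x < c \<longrightarrow> (\<exists>e>0. \<forall>y\<in>S. dist y x < e \<longrightarrow> u y < c))"

definition lsc_on :: "'a::metric_space set \<Rightarrow> ('a \<Rightarrow> real) \<Rightarrow> bool" where
  "lsc_on S u \<longleftrightarrow> (\<forall>x\<in>S. \<forall>c. c < u x \<longrightarrow> (\<exists>e>0. \<forall>y\<in>S. dist y x < e \<longrightarrow> c < u y))"

definition grad :: "(real^'n \<Rightarrow> real) \<Rightarrow> real^'n \<Rightarrow> real^'n" where
  "grad \<phi> x = (\<chi> i. frechet_derivative \<phi> (at x) (axis i 1))"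

definition hess :: "(real^'n \<Rightarrow> real) \<Rightarrow> real^'n \<Rightarrow> real^'n^'n" where
  "hess \<phi> x = (\<chi> i j. frechet_derivative (\<lambda>y. grad \<phi> y $ i) (at x) (axis j 1))"

definition C2 :: "(real^'n \<Rightarrow> real) \<Rightarrow> bool" where
  "C2 \<phi> \<longleftrightarrow> (\<forall>x. \<phi> differentiable (at x))
     \<and> (\<forall>i x. (\<lambda>y. grad \<phi> y $ i) differentiable (at x))
     \<and> continuous_on UNIV (hess \<phi>)"

definition symmetric_mat :: "real^'n^'n \<Rightarrow> bool" where
  "symmetric_mat A \<longleftrightarrow> transpose A = A"

definition lambda1 :: "real^'n^'n \<Rightarrow> real" where
  "lambda1 A = Min {l. \<exists>v. v \<noteq> 0 \<and> A *v v = l *\<^sub>R v}"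

definition defining_function :: "(real^'n) set \<Rightarrow> (real^'n \<Rightarrow> real) \<Rightarrow> bool" where
  "defining_function Y H \<longleftrightarrow> continuous_on UNIV H
     \<and> (\<forall>y\<in>Y. H y < 0) \<and> (\<forall>y\<in>frontier Y. H y = 0) \<and> (\<forall>y. y \<notin> closure Y \<longrightarrow> H y > 0)"

definition Fop :: "(real^'n \<Rightarrow> real) \<Rightarrow> (real^'n \<Rightarrow> real) \<Rightarrow> (real^'n \<Rightarrow> real)
    \<Rightarrow> real^'n \<Rightarrow> real^'n \<Rightarrow> real^'n^'n \<Rightarrow> real" where
  "Fop f g H x p A = max (max (- g p * det A + f x) (- lambda1 A)) (H p)"

definition Fop_lower :: "(real^'n \<Rightarrow> real) \<Rightarrow> (real^'n \<Rightarrow> real) \<Rightarrow> (real^'n \<Rightarrow> real)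
    \<Rightarrow> (real^'n) set \<Rightarrow> real^'n \<Rightarrow> real^'n \<Rightarrow> real^'n^'n \<Rightarrow> ereal" where
  "Fop_lower f g H X x p A =
     Liminf (inf (nhds (x, p, A)) (principal (X \<times> UNIV \<times> {B. symmetric_mat B})))
       (\<lambda>(y, q, B). ereal (Fop f g H y q B))"

definition local_max_at :: "'a::metric_space set \<Rightarrow> ('a \<Rightarrow> real) \<Rightarrow> 'a \<Rightarrow> bool" where
  "local_max_at S w x \<longleftrightarrow> x \<in> S \<and> (\<exists>e>0. \<forall>y\<in>S. dist y x < e \<longrightarrow> w y \<le> w x)"

definition strict_local_max_at :: "'a::metric_space set \<Rightarrow> ('a \<Rightarrow> real) \<Rightarrow> 'a \<Rightarrow> bool" where
  "strict_local_max_at S w x \<longleftrightarrow> x \<in> S \<and> (\<exists>e>0. \<forall>y\<in>S. dist y x < e \<longrightarrow> y \<noteq> x \<longrightarrow> w y < w x)"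

definition viscosity_subsolution :: "(real^'n \<Rightarrow> real) \<Rightarrow> (real^'n \<Rightarrow> real) \<Rightarrow> (real^'n \<Rightarrow> real)
    \<Rightarrow> (real^'n) set \<Rightarrow> (real^'n \<Rightarrow> real) \<Rightarrow> bool" where
  "viscosity_subsolution f g H X u \<longleftrightarrow> usc_on X u \<and>
     (\<forall>\<phi> x. C2 \<phi> \<longrightarrow> x \<in> X \<longrightarrow> local_max_at X (\<lambda>y. u y - \<phi> y) x \<longrightarrow>
        Fop_lower f g H X x (grad \<phi> x) (hess \<phi> x) \<le> 0)"

end

theory Submission
  imports Defs
begin

lemma sym_inner:
  fixes B :: "real^'n^'n"
  assumes "symmetric_mat B"
  shows "w \<bullet> (B *v v) = v \<bullet> (B *v w)"
proof -
  have "w \<bullet> (B *v v) = (w v* B) \<bullet> v" by (simp add: dot_lmul_matrix)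
  also have "w v* B = transpose B *v w" by simp
  also have "\<dots> = B *v w" using assms by (simp add: symmetric_mat_def)
  finally show ?thesis by (simp add: inner_commute)
qed

lemma quad_zero:
  fixes a b :: real
  assumes "\<And>t. 0 \<le> a * t + b * t^2"
  shows "a = 0"
proof -
  define s where "s = 1 / (\<bar>b\<bar> + 1)"
  have s: "s > 0" "\<bar>b\<bar> * s < 1" unfolding s_def by (auto simp: field_simps)
  have "b * s < 1" using s by (smt (verit) abs_ge_self mult_right_mono)
  have "0 \<le> a * (- a * s) + b * (- a * s)^2" by (rule assms)
  also have "\<dots> = a^2 * s * (b * s - 1)" by (simp add: power2_eq_square algebra_simps)
  finally have "0 \<le> a^2 * s * (b * s - 1)" .
  moreover have "a \<noteq> 0 \<Longrightarrow> a^2 * s * (b * s - 1) < 0"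
    using s \<open>b * s < 1\<close> by (simp add: mult_pos_neg)
  ultimately show ?thesis by linarith
qed

lemma expand_q:
  fixes B :: "real^'n^'n"
  assumes "symmetric_mat B"
  shows "(v + t *\<^sub>R w) \<bullet> (B *v (v + t *\<^sub>R w)) = v \<bullet> (B *v v) + 2 * t * (w \<bullet> (B *v v)) + t^2 * (w \<bullet> (B *v w))"
proof -
  have "B *v (v + t *\<^sub>R w) = B *v v + t *\<^sub>R (B *v w)"
    by (simp add: matrix_vector_right_distrib matrix_vector_mult_scaleR)
  then show ?thesis using sym_inner[OF assms, of v w]
    by (simp add: inner_add_left inner_add_right power2_eq_square algebra_simps)
qed

lemma min_eig:
  fixes B :: "real^'n^'n"
  assumes sB: "symmetric_mat B"
  shows "\<exists>v \<mu>. norm v = 1 \<and> B *v v = \<mu> *\<^sub>R v \<and> (\<forall>w. \<mu> * (norm w)^2 \<le> w \<bullet> (B *v w))"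
proof -
  let ?q = "\<lambda>v. v \<bullet> (B *v v)"
  have ne: "sphere (0::real^'n) 1 \<noteq> {}"
    by (metis norm_axis_1 mem_sphere_0 empty_iff)
  have "continuous_on (sphere 0 1) ?q"
    by (intro continuous_intros)
  then obtain v where v: "v \<in> sphere 0 1" and vmin: "\<And>y. y \<in> sphere 0 1 \<Longrightarrow> ?q v \<le> ?q y"
    using continuous_attains_inf[OF compact_sphere ne] by blast
  define \<mu> where "\<mu> = ?q v"
  have nv: "norm v = 1" using v by simp
  have low: "\<mu> * (norm w)^2 \<le> ?q w" for w
  proof (cases "w = 0")
    case True then show ?thesis by simp
  next
    case False
    let ?u = "(1 / norm w) *\<^sub>R w"
    have "?u \<in> sphere 0 1" using False by simp
    then have "\<mu> \<le> ?q ?u" unfolding \<mu>_def by (rule vmin)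
    also have "?q ?u = ?q w / (norm w)^2"
      by (simp add: matrix_vector_mult_scaleR power2_eq_square)
    finally show ?thesis using False by (simp add: field_simps)
  qed
  have eig: "B *v v = \<mu> *\<^sub>R v"
  proof -
    define r where "r = B *v v - \<mu> *\<^sub>R v"
    have "0 \<le> (2 * (r \<bullet> (B *v v)) - 2 * \<mu> * (v \<bullet> r)) * t + (?q r - \<mu> * (norm r)^2) * t^2" for t
    proof -
      have "\<mu> * (norm (v + t *\<^sub>R r))^2 \<le> ?q (v + t *\<^sub>R r)" by (rule low)
      also have "\<dots> = \<mu> + 2 * t * (r \<bullet> (B *v v)) + t^2 * ?q r"
        using expand_q[OF sB] \<mu>_def by simp
      also have "(norm (v + t *\<^sub>R r))^2 = 1 + 2 * t * (v \<bullet> r) + t^2 * (norm r)^2"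
      proof -
        have "v \<bullet> v = 1" using nv by (metis norm_eq_1)
        then show ?thesis unfolding power2_norm_eq_inner
          by (simp add: inner_add_left inner_add_right power2_eq_square algebra_simps inner_commute)
      qed
      finally show ?thesis by (simp add: algebra_simps)
    qed
    from quad_zero[OF this] have "r \<bullet> (B *v v) - \<mu> * (v \<bullet> r) = 0" by simp
    then have "r \<bullet> r = 0" unfolding r_def
      by (simp add: inner_diff_left inner_diff_right inner_commute algebra_simps)
    then show ?thesis unfolding r_def by simp
  qed
  show ?thesis using nv eig low by blast
qed

lemma eig_orth:
  fixes B :: "real^'n^'n"
  assumes sB: "symmetric_mat B" and "B *v v = l1 *\<^sub>R v" "B *v w = l2 *\<^sub>R w" "l1 \<noteq> l2"
  shows "v \<bullet> w = 0"
proof -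
  have "w \<bullet> (B *v v) = v \<bullet> (B *v w)" by (rule sym_inner[OF sB])
  then have "l1 * (v \<bullet> w) = l2 * (v \<bullet> w)" using assms by (simp add: inner_commute)
  then show ?thesis using assms(4) by simp
qed

lemma eig_finite:
  fixes B :: "real^'n^'n"
  assumes sB: "symmetric_mat B"
  shows "finite {l. \<exists>v. v \<noteq> 0 \<and> B *v v = l *\<^sub>R v}"
proof -
  define E where "E = {l. \<exists>v. v \<noteq> 0 \<and> B *v v = l *\<^sub>R v}"
  define ev where "ev l = (SOME v. v \<noteq> 0 \<and> B *v v = l *\<^sub>R v)" for l
  have ev: "ev l \<noteq> 0 \<and> B *v ev l = l *\<^sub>R ev l" if "l \<in> E" for l
    using that unfolding E_def ev_def by (metis (mono_tags, lifting) mem_Collect_eq someI_ex)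
  have inj: "inj_on ev E"
  proof (rule inj_onI)
    fix a b assume "a \<in> E" "b \<in> E" "ev a = ev b"
    then have "a *\<^sub>R ev a = b *\<^sub>R ev a" using ev by metis
    then show "a = b" using ev[OF \<open>a \<in> E\<close>] by (simp add: scaleR_cancel_right)
  qed
  have "pairwise orthogonal (ev ` E)"
    unfolding pairwise_def orthogonal_def
    by (metis (no_types, lifting) ev eig_orth[OF sB] imageE)
  moreover have "0 \<notin> ev ` E" using ev by auto
  ultimately have "independent (ev ` E)" by (rule pairwise_orthogonal_independent)
  then have "finite (ev ` E)" using independent_bound by blast
  then show ?thesis using finite_imageD[OF _ inj] unfolding E_def by blast
qed

lemma lambda1_char:
  fixes B :: "real^'n^'n"
  assumes sB: "symmetric_mat B"
  shows "(\<forall>w. lambda1 B * (norm w)^2 \<le> w \<bullet> (B *v w)) \<and> (\<exists>v. norm v = 1 \<and> v \<bullet> (B *v v) = lambda1 B)"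
proof -
  obtain v \<mu> where v: "norm v = 1" "B *v v = \<mu> *\<^sub>R v" and low: "\<And>w. \<mu> * (norm w)^2 \<le> w \<bullet> (B *v w)"
    using min_eig[OF sB] by blast
  have "lambda1 B = \<mu>"
    unfolding lambda1_def
  proof (rule Min_eqI)
    show "finite {l. \<exists>v. v \<noteq> 0 \<and> B *v v = l *\<^sub>R v}" by (rule eig_finite[OF sB])
    show "\<mu> \<in> {l. \<exists>v. v \<noteq> 0 \<and> B *v v = l *\<^sub>R v}" using v by (auto intro!: exI[of _ v])
    fix y assume "y \<in> {l. \<exists>v. v \<noteq> 0 \<and> B *v v = l *\<^sub>R v}"
    then obtain w where w: "w \<noteq> 0" "B *v w = y *\<^sub>R w" by blast
    have "\<mu> * (norm w)^2 \<le> y * (norm w)^2"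
      using low[of w] w by (simp add: power2_norm_eq_inner)
    then show "\<mu> \<le> y" using w by simp
  qed
  moreover have "v \<bullet> (B *v v) = \<mu>" using v by (simp add: power2_norm_eq_inner[symmetric])
  ultimately show ?thesis using low v by auto
qed

lemma scaleR_mat_mulv: "((k::real) *\<^sub>R (A::real^'n^'m)) *v v = k *\<^sub>R (A *v v)"
  by (simp add: vec_eq_iff matrix_vector_mult_def sum_distrib_left algebra_simps)

lemma continuous_det: "continuous_on UNIV (det :: real^'n^'n \<Rightarrow> real)"
  unfolding det_def by (intro continuous_intros)

lemma det_pos_def:
  fixes M :: "real^'n^'n"
  assumes "\<And>v. v \<noteq> 0 \<Longrightarrow> 0 < v \<bullet> (M *v v)"
  shows "det M \<noteq> 0"
proof -
  have "inj ((*v) M)"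
  proof (rule injI)
    fix x y assume "M *v x = M *v y"
    then have "M *v (x - y) = 0" by (simp add: matrix_vector_mult_diff_distrib)
    then show "x = y" using assms[of "x - y"] by fastforce
  qed
  then show ?thesis using det_nz_iff_inj[of "(*v) M"] by (simp add: matrix_of_matrix_vector_mul)
qed

lemma det_psd:
  fixes A :: "real^'n^'n"
  assumes psd: "\<And>v. 0 \<le> v \<bullet> (A *v v)"
  shows "0 \<le> det A"
proof -
  have pos: "0 \<le> det (A + t *\<^sub>R mat 1)" if t: "t > 0" for t
  proof (rule ccontr)
    assume neg: "\<not> 0 \<le> det (A + t *\<^sub>R mat 1)"
    define h where "h s = det ((1 - s) *\<^sub>R mat 1 + s *\<^sub>R (A + t *\<^sub>R mat 1))" for s :: real
    have "continuous_on {0..1} h" unfolding h_def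
      by (rule continuous_on_compose2[OF continuous_det]) (auto intro!: continuous_intros)
    moreover have "h 1 \<le> 0" "0 \<le> h 0" using neg by (auto simp: h_def)
    ultimately obtain s where s: "0 \<le> s" "s \<le> 1" "h s = 0"
      using IVT2'[of h 1 0 0] by auto
    have "h s \<noteq> 0" unfolding h_def
    proof (rule det_pos_def)
      fix v :: "real^'n" assume "v \<noteq> 0"
      then have nv: "0 < v \<bullet> v" by simp
      have "v \<bullet> (((1 - s) *\<^sub>R mat 1 + s *\<^sub>R (A + t *\<^sub>R mat 1)) *v v)
          = (1 - s + s * t) * (v \<bullet> v) + s * (v \<bullet> (A *v v))"
        by (simp add: matrix_vector_mult_add_rdistrib scaleR_mat_mulv inner_add_right algebra_simps)
      moreover have "0 < (1 - s + s * t) * (v \<bullet> v)"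
      proof -
        have "0 < 1 - s + s * t"
        proof (cases "s = 1")
          case True then show ?thesis using t by simp
        next
          case False then show ?thesis using s t by (smt (verit) mult_nonneg_nonneg)
        qed
        then show ?thesis using nv by simp
      qed
      moreover have "0 \<le> s * (v \<bullet> (A *v v))" using s psd by simp
      ultimately show "0 < v \<bullet> (((1 - s) *\<^sub>R mat 1 + s *\<^sub>R (A + t *\<^sub>R mat 1)) *v v)" by linarith
    qed
    then show False using s by simp
  qed
  have "((\<lambda>t. det (A + t *\<^sub>R mat 1)) \<longlongrightarrow> det (A + 0 *\<^sub>R mat 1)) (at_right 0)"
    by (rule tendsto_within_subset[OF _ subset_UNIV], rule continuous_on_compose2[OF continuous_det, of UNIV, THEN continuous_on_def[THEN iffD1], rule_format])
       (auto intro!: continuous_intros)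
  then have lim: "((\<lambda>t. det (A + t *\<^sub>R mat 1)) \<longlongrightarrow> det A) (at_right 0)" by simp
  show ?thesis
    by (rule tendsto_lowerbound[OF lim]) (auto simp: eventually_at_right_field intro!: exI[of _ 1] pos)
qed

lemma ev_open:
  assumes "continuous_on UNIV h" "open U" "h z0 \<in> U"
  shows "eventually (\<lambda>z. h z \<in> U) (nhds z0)"
proof -
  have "open (h -` U)" using assms by (simp add: open_vimage)
  then show ?thesis unfolding eventually_nhds using assms(3) by (intro exI[of _ "h -` U"]) auto
qed

lemma closed_sym: "closed {B::real^'n^'n. symmetric_mat B}"
proof -
  have "continuous_on UNIV (transpose :: real^'n^'n \<Rightarrow> _)"
    unfolding transpose_def by (intro continuous_intros)
  then show ?thesis unfolding symmetric_mat_def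
    using closed_Collect_eq[of transpose "\<lambda>B. B"] by (simp add: continuous_on_id)
qed

lemma cont_quad: "continuous_on UNIV (\<lambda>B::real^'n^'n. v \<bullet> (B *v v))"
  unfolding matrix_vector_mult_def inner_vec_def by (intro continuous_intros)

lemma liminf_pos:
  fixes \<Phi> :: "'a \<Rightarrow> real"
  assumes "c > 0" "eventually (\<lambda>z. c < \<Phi> z) F"
  shows "0 < Liminf F (\<lambda>z. ereal (\<Phi> z))"
proof -
  have "ereal c \<le> Liminf F (\<lambda>z. ereal (\<Phi> z))"
    unfolding le_Liminf_iff
  proof (intro allI impI)
    fix y assume "y < ereal c"
    show "eventually (\<lambda>z. y < ereal (\<Phi> z)) F"
      using assms(2) by eventually_elim (use \<open>y < ereal c\<close> in \<open>meson less_ereal.simps(1) order.strict_trans\<close>)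
  qed
  then show ?thesis using assms(1) by (meson ereal_less(2) less_le_trans)
qed

theorem mainTheorem2:
  fixes X Y :: "(real^'n) set" and f g H u \<phi> :: "real^'n \<Rightarrow> real" and x :: "real^'n"
  assumes H1: "convex X" "bounded X" "open X" "convex Y" "bounded Y" "open Y"
    and H2: "set_integrable lebesgue X f" "\<forall>z\<in>X. 0 \<le> f z" "lsc_on X f"
    and H3: "integrable lebesgue g" "\<forall>y\<in>Y. 0 < g y" "\<forall>y. y \<notin> Y \<longrightarrow> g y = 0" "usc_on UNIV g"
    and H4: "(LINT z:X|lebesgue. f z) = (LINT y:Y|lebesgue. g y)"
    and hH: "defining_function Y H"
    and hu: "viscosity_subsolution f g H X u"
    and hphi: "C2 \<phi>"
    and hx: "x \<in> X"
    and hmax: "strict_local_max_at X (\<lambda>y. u y - \<phi> y) x"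
  shows "Fop f g H x (grad \<phi> x) (hess \<phi> x) \<le> 0"
proof (rule ccontr)
  assume pos0: "\<not> Fop f g H x (grad \<phi> x) (hess \<phi> x) \<le> 0"
  define p where "p = grad \<phi> x"
  define A where "A = hess \<phi> x"
  define S where "S = X \<times> (UNIV::(real^'n) set) \<times> {B::real^'n^'n. symmetric_mat B}"
  define F where "F = inf (nhds (x, p, A)) (principal S)"
  define \<Phi> where "\<Phi> z = Fop f g H (fst z) (fst (snd z)) (snd (snd z))" for z
  have pos: "0 < Fop f g H x p A" using pos0 unfolding p_def A_def by simp
  have "local_max_at X (\<lambda>y. u y - \<phi> y) x"
    using hmax unfolding strict_local_max_at_def local_max_at_def by (metis less_imp_le order_refl)
  then have "Fop_lower f g H X x p A \<le> 0"
    using hu hphi hx unfolding viscosity_subsolution_def p_def A_def by blast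
  moreover have eqL: "Fop_lower f g H X x p A = Liminf F (\<lambda>z. ereal (\<Phi> z))"
    unfolding Fop_lower_def F_def S_def \<Phi>_def by (rule arg_cong[where f = "Liminf _"]) (auto simp: fun_eq_iff)
  ultimately have L: "Liminf F (\<lambda>z. ereal (\<Phi> z)) \<le> 0" by simp
  have evF: "eventually P F" if "eventually (\<lambda>z. z \<in> S \<longrightarrow> P z) (nhds (x, p, A))" for P
    using that unfolding F_def by (simp add: eventually_inf_principal)
  have contr: False if "c > 0" "eventually (\<lambda>z. c < \<Phi> z) F" for c
    using liminf_pos[OF that] L by simp
  show False
  proof (cases "symmetric_mat A")
    case False
    have "eventually (\<lambda>z. snd (snd z) \<in> - {B::real^'n^'n. symmetric_mat B}) (nhds (x, p, A))"
      by (rule ev_open) (use False closed_sym in \<open>auto intro!: continuous_intros\<close>)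
    then have "eventually (\<lambda>z. 1 < \<Phi> z) F"
      by (intro evF) (auto elim!: eventually_mono simp: S_def)
    from contr[OF _ this] show False by simp
  next
    case sA: True
    note lc = lambda1_char[OF sA]
    show False
    proof (cases "H p > 0")
      case True
      have "eventually (\<lambda>z. H (fst (snd z)) \<in> {H p / 2 <..}) (nhds (x, p, A))"
        by (rule ev_open) (use True hH in \<open>auto simp: defining_function_def intro!: continuous_on_compose2[of UNIV H] continuous_intros\<close>)
      then have "eventually (\<lambda>z. H p / 2 < \<Phi> z) F"
        by (intro evF) (auto elim!: eventually_mono simp: \<Phi>_def Fop_def max_def)
      from contr[OF _ this] show False using True by simp
    next
      case Hp: False
      show False
      proof (cases "lambda1 A < 0")
        case True
        obtain v where v: "norm v = 1" "v \<bullet> (A *v v) = lambda1 A" using lc by blast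
        have "eventually (\<lambda>z. v \<bullet> (snd (snd z) *v v) \<in> {..< lambda1 A / 2}) (nhds (x, p, A))"
        proof (rule ev_open)
          show "continuous_on UNIV (\<lambda>z::(real^'n)\<times>(real^'n)\<times>(real^'n^'n). v \<bullet> (snd (snd z) *v v))"
            by (rule continuous_on_compose2[OF cont_quad[of v], of UNIV "\<lambda>z. snd (snd z)"]) (auto intro!: continuous_intros)
        qed (use True v in auto)
        then have "eventually (\<lambda>z. - lambda1 A / 2 < \<Phi> z) F"
        proof (intro evF, elim eventually_mono, intro impI)
          fix z assume "v \<bullet> (snd (snd z) *v v) \<in> {..< lambda1 A / 2}" "z \<in> S"
          then have "v \<bullet> (snd (snd z) *v v) < lambda1 A / 2" "symmetric_mat (snd (snd z))" by (auto simp: S_def)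
          moreover have "lambda1 (snd (snd z)) * (norm v)^2 \<le> v \<bullet> (snd (snd z) *v v)" using lambda1_char[OF \<open>symmetric_mat (snd (snd z))\<close>] by blast
          ultimately have "- lambda1 A / 2 < - lambda1 (snd (snd z))" using v by simp
          then show "- lambda1 A / 2 < \<Phi> z" by (simp add: \<Phi>_def Fop_def)
        qed
        from contr[OF _ this] show False using True by simp
      next
        case lam: False
        have psd: "0 \<le> v \<bullet> (A *v v)" for v
          using lc lam by (meson mult_nonneg_nonneg not_le order_trans zero_le_power2)
        have dA: "0 \<le> det A" by (rule det_psd[OF psd])
        have gnn: "0 \<le> g y" for y using H3(2,3) by (metis less_eq_real_def)
        define d where "d = - g p * det A + f x"
        have d: "d > 0" using pos Hp lam unfolding d_def Fop_def by (auto simp: max_def split: if_splits)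
        define \<delta> where "\<delta> = min 1 (d / (2 * (det A + g p + 2)))"
        have den: "0 < det A + g p + 2" using dA gnn[of p] by simp
        have \<delta>: "0 < \<delta>" "\<delta> \<le> 1" "\<delta> * (det A + g p + 2) \<le> d / 2"
        proof -
          show "0 < \<delta>" using d den unfolding \<delta>_def by simp
          show "\<delta> \<le> 1" unfolding \<delta>_def by simp
          have "\<delta> * (det A + g p + 2) \<le> (d / (2 * (det A + g p + 2))) * (det A + g p + 2)"
            unfolding \<delta>_def using den by (intro mult_right_mono) auto
          also have "\<dots> = d / 2" using den by (simp add: field_simps)
          finally show "\<delta> * (det A + g p + 2) \<le> d / 2" .
        qed
        obtain e1 where e1: "e1 > 0" "\<And>y. y \<in> X \<Longrightarrow> dist y x < e1 \<Longrightarrow> f x - \<delta> < f y"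
        proof -
          have "f x - \<delta> < f x" using \<delta>(1) by simp
          then show ?thesis using H2(3) hx that unfolding lsc_on_def by blast
        qed
        obtain e2 where e2: "e2 > 0" "\<And>q. dist q p < e2 \<Longrightarrow> g q < g p + \<delta>"
        proof -
          have "g p < g p + \<delta>" using \<delta>(1) by simp
          then show ?thesis using H3(4) that unfolding usc_on_def by blast
        qed
        have ev1: "eventually (\<lambda>z. fst z \<in> ball x e1) (nhds (x, p, A))"
          by (rule ev_open) (use e1 in \<open>auto intro!: continuous_intros\<close>)
        have ev2: "eventually (\<lambda>z. fst (snd z) \<in> ball p e2) (nhds (x, p, A))"
          by (rule ev_open) (use e2 in \<open>auto intro!: continuous_intros\<close>)
        have ev3: "eventually (\<lambda>z. det (snd (snd z)) \<in> {..< det A + \<delta>}) (nhds (x, p, A))"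
        proof (rule ev_open)
          show "continuous_on UNIV (\<lambda>z::(real^'n)\<times>(real^'n)\<times>(real^'n^'n). det (snd (snd z)))"
            by (rule continuous_on_compose2[OF continuous_det, of UNIV "\<lambda>z. snd (snd z)"]) (auto intro!: continuous_intros)
        qed (use \<delta> in auto)
        have "eventually (\<lambda>z. d / 2 < \<Phi> z) F"
        proof (intro evF, rule eventually_mono[OF eventually_conj[OF ev1 eventually_conj[OF ev2 ev3]]], intro impI)
          fix z assume a: "fst z \<in> ball x e1 \<and> fst (snd z) \<in> ball p e2 \<and>
            det (snd (snd z)) \<in> {..< det A + \<delta>}" "z \<in> S"
          obtain y q B where zz: "z = (y, q, B)" by (cases z) auto
          from a have y: "y \<in> X" "dist y x < e1" and q: "dist q p < e2" and dB: "det B < det A + \<delta>"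
            by (auto simp: S_def dist_commute zz)
          have fy: "f x - \<delta> < f y" using e1(2)[OF y] .
          have gq: "g q < g p + \<delta>" "0 \<le> g q" using e2(2)[OF q] gnn by auto
          have "g q * det B \<le> (g p + \<delta>) * (det A + \<delta>)"
          proof (cases "det B \<ge> 0")
            case True
            have "g q * det B \<le> (g p + \<delta>) * det B" using gq True by (simp add: mult_right_mono)
            also have "\<dots> \<le> (g p + \<delta>) * (det A + \<delta>)" using dB gnn[of p] \<delta> by (simp add: mult_left_mono)
            finally show ?thesis .
          next
            case False
            then have "g q * det B \<le> 0" using gq by (simp add: mult_nonneg_nonpos)
            also have "0 \<le> (g p + \<delta>) * (det A + \<delta>)" using dA gnn[of p] \<delta> by simp
            finally show ?thesis .
          qed
          moreover have "(g p + \<delta>) * (det A + \<delta>) + \<delta> \<le> g p * det A + d / 2"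
          proof -
            have "\<delta> * \<delta> \<le> \<delta>" using \<delta> by (simp add: mult_left_le)
            then have "(g p + \<delta>) * (det A + \<delta>) + \<delta> \<le> g p * det A + \<delta> * (det A + g p + 2)"
              by (simp add: algebra_simps)
            then show ?thesis using \<delta>(3) by linarith
          qed
          moreover have "- g q * det B = - (g q * det B)" "d = f x - g p * det A" unfolding d_def by simp_all
          ultimately have "d / 2 < - g q * det B + f y" using fy by linarith
          then show "d / 2 < \<Phi> z" by (simp add: \<Phi>_def Fop_def zz max_def)
        qed
        from contr[OF _ this] show False using d by simp
      qed
    qed
  qed
qed

end
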